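(* Let $\mathcal{X}\subset\mathbb{R}^d$, $\mathcal{Y}=\{1,\dots,K\}$ with $K\ge 2$, let $\mathcal{H}$ be a class of classifiers $h:\mathcal{X}\to\mathcal{Y}$, and let $Q$ be any probability distribution on $\mathcal{H}$. Let $P$ be any joint distribution of $(\mathbf{X},Y)$ on $\mathcal{X}\times\mathcal{Y}$. Let $M$ be a real random variable such that, conditionally on $\mathbf{X}=\mathbf{x}$, $M$ is discrete and equals the margin $M_Q(\mathbf{x},i)$ with probability $P(Y=i\mid \mathbf{X}=\mathbf{x})$, for $i=1,\dots,K$ (equivalently, $M=M_Q(\mathbf{X},Y)$). Let $\mu^M_1=\mathbb{E}[M]$ and $\mu^M_2=\mathbb{E}[M^2]$. If $\mu^M_1>0$, then $$R(B_Q)\le 1-\frac{(\mu^M_1)^2}{\mu^M_2}.$$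
   Context: For $\mathbf{x}\in\mathcal{X}$ and $c\in\mathcal{Y}$, the vote is $v_Q(\mathbf{x},c)=\mathbb{E}_{h\sim Q}\,\mathbb{1}[h(\mathbf{x})=c]$. The Bayes (majority vote) classifier is $B_Q(\mathbf{x})\in\arg\max_{c\in\mathcal{Y}} v_Q(\mathbf{x},c)$ (ties broken arbitrarily). The margin is $M_Q(\mathbf{x},y)=v_Q(\mathbf{x},y)-\max_{c\in\mathcal{Y},c\neq y}v_Q(\mathbf{x},c)$. The risk of $B_Q$ is $R(B_Q)=\mathbb{E}_{\mathbf{X}}\big[\sum_{i\in\mathcal{Y},\, i\neq B_Q(\mathbf{X})}P(Y=i\mid\mathbf{X})\big]=P(B_Q(\mathbf{X})\neq Y)$. *)

theory Defs
  imports "HOL-Probability.Probability"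
begin

definition vote :: "('x \<Rightarrow> nat) measure \<Rightarrow> 'x \<Rightarrow> nat \<Rightarrow> real" where
  "vote Q x c = measure Q {h \<in> space Q. h x = c}"

definition margin :: "('x \<Rightarrow> nat) measure \<Rightarrow> nat \<Rightarrow> 'x \<Rightarrow> nat \<Rightarrow> real" where
  "margin Q K x y = vote Q x y - Max ((\<lambda>c. vote Q x c) ` ({1..K} - {y}))"

definition is_majority_vote ::
  "('x \<Rightarrow> nat) measure \<Rightarrow> nat \<Rightarrow> 'x set \<Rightarrow> ('x \<Rightarrow> nat) \<Rightarrow> bool" where
  "is_majority_vote Q K Xs B \<longleftrightarrow>
     (\<forall>x\<in>Xs. B x \<in> {1..K} \<and> (\<forall>c\<in>{1..K}. vote Q x c \<le> vote Q x (B x)))"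

end

theory Submission
  imports Defs
begin

lemma vote_01: "prob_space Q \<Longrightarrow> 0 \<le> vote Q x c \<and> vote Q x c \<le> 1"
  unfolding vote_def by (simp add: prob_space.prob_le_1)

lemma margin_bound:
  assumes "prob_space Q" "K \<ge> 2"
  shows "\<bar>margin Q K x y\<bar> \<le> 1"
proof -
  let ?S = "(\<lambda>c. vote Q x c) ` ({1..K} - {y})"
  have ne: "({1..K} - {y}) \<noteq> {}"
  proof -
    have "1 \<in> {1..K}" "2 \<in> {1..K}" using assms by auto
    then show ?thesis
    proof (cases "y = 1")
      case True then have "2 \<in> {1..K} - {y}" using \<open>2 \<in> {1..K}\<close> by auto
      then show ?thesis by blast
    next
      case False then have "1 \<in> {1..K} - {y}" using \<open>1 \<in> {1..K}\<close> by auto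
      then show ?thesis by blast
    qed
  qed
  have fin: "finite ?S" by simp
  obtain c where c: "c \<in> {1..K} - {y}" using ne by blast
  have "Max ?S \<in> ?S" using fin ne by (intro Max_in) auto
  then obtain d where "Max ?S = vote Q x d" by auto
  then show ?thesis unfolding margin_def using vote_01[OF assms(1), of x d] vote_01[OF assms(1), of x y]
    by auto
qed

theorem theorem1:
  fixes Xs :: "(real ^ 'd) set"
    and K :: nat
    and H :: "((real ^ 'd) \<Rightarrow> nat) set"
    and Q :: "((real ^ 'd) \<Rightarrow> nat) measure"
    and P :: "((real ^ 'd) \<times> nat) measure"
    and B :: "(real ^ 'd) \<Rightarrow> nat"
  assumes K2: "K \<ge> 2"
    and H_class: "\<forall>h\<in>H. \<forall>x\<in>Xs. h x \<in> {1..K}"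
    and Q_prob: "prob_space Q"
    and Q_on_H: "space Q \<subseteq> H"
    and Q_meas: "\<forall>x\<in>Xs. \<forall>c. {h \<in> space Q. h x = c} \<in> sets Q"
    and P_prob: "prob_space P"
    and P_support: "AE z in P. fst z \<in> Xs \<and> snd z \<in> {1..K}"
    and M_meas: "(\<lambda>z. margin Q K (fst z) (snd z)) \<in> borel_measurable P"
    and B_bayes: "is_majority_vote Q K Xs B"
    and B_meas: "{z \<in> space P. B (fst z) \<noteq> snd z} \<in> sets P"
    and mu1_pos: "(\<integral>z. margin Q K (fst z) (snd z) \<partial>P) > 0"
  shows "measure P {z \<in> space P. B (fst z) \<noteq> snd z}
           \<le> 1 - (\<integral>z. margin Q K (fst z) (snd z) \<partial>P)\<^sup>2
                 / (\<integral>z. (margin Q K (fst z) (snd z))\<^sup>2 \<partial>P)"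
proof -
  interpret P: prob_space P by (rule P_prob)
  define M where "M = (\<lambda>z. margin Q K (fst z) (snd z))"
  define m1 where "m1 = (\<integral>z. M z \<partial>P)"
  define m2 where "m2 = (\<integral>z. (M z)\<^sup>2 \<partial>P)"
  define A where "A = {z \<in> space P. M z > 0}"
  define p where "p = measure P A"
  have Mm: "M \<in> borel_measurable P" using M_meas unfolding M_def .
  have Mb: "\<And>z. \<bar>M z\<bar> \<le> 1" unfolding M_def by (rule margin_bound[OF Q_prob K2])
  have A_sets: "A \<in> sets P" unfolding A_def using Mm by measurable
  have iM: "integrable P M" by (rule P.integrable_const_bound[where B=1]) (use Mb Mm in auto)
  have iM2: "integrable P (\<lambda>z. (M z)\<^sup>2)"
    by (rule P.integrable_const_bound[where B=1]) (use Mb Mm in \<open>auto simp: abs_square_le_1\<close>)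
  have iA: "integrable P (indicator A :: _ \<Rightarrow> real)"
    using A_sets by (simp add: P.emeasure_eq_measure)
  have m1pos: "m1 > 0" using mu1_pos unfolding m1_def M_def .
  have key: "m1 \<le> m2 / (2*t) + t/2 * p" if t: "t > 0" for t
  proof -
    have pw: "M z \<le> (M z)\<^sup>2 / (2*t) + t/2 * indicator A z" if "z \<in> space P" for z
    proof (cases "M z > 0")
      case True
      then have "z \<in> A" using that unfolding A_def by auto
      moreover have "M z \<le> (M z)\<^sup>2 / (2*t) + t/2"
      proof -
        have "0 \<le> (M z - t)\<^sup>2" by simp
        then have "2*t*M z \<le> (M z)\<^sup>2 + t*t" by (simp add: power2_eq_square algebra_simps)
        then show ?thesis using t by (simp add: field_simps)
      qed
      ultimately show ?thesis by simp
    next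
      case False
      have "0 \<le> (M z)\<^sup>2 / (2*t)" using t by simp
      moreover have "0 \<le> t/2 * indicator A z" using t by simp
      ultimately show ?thesis using False by linarith
    qed
    have "m1 \<le> (\<integral>z. (M z)\<^sup>2 / (2*t) + t/2 * indicator A z \<partial>P)"
      unfolding m1_def using pw iM iM2 iA by (intro integral_mono) auto
    also have "\<dots> = m2 / (2*t) + t/2 * p"
      unfolding m2_def p_def using iM2 iA A_sets by (simp)
    finally show ?thesis .
  qed
  have p_le: "p \<le> 1" unfolding p_def by simp
  have m2pos: "m2 > 0"
  proof (rule ccontr)
    assume "\<not> m2 > 0"
    moreover have "m2 \<ge> 0" unfolding m2_def by simp
    ultimately have "m2 = 0" by simp
    then have "m1 \<le> m1/2 * p" using key[OF m1pos] by simp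
    also have "\<dots> \<le> m1/2" using p_le m1pos by (simp add: mult_left_le)
    finally show False using m1pos by simp
  qed
  have "m1 \<le> m1/2 + m2/m1/2 * p"
    using key[of "m2/m1"] m1pos m2pos by simp
  then have "m1 * m1 \<le> m2 * p" using m1pos by (simp add: field_simps)
  then have pge: "m1\<^sup>2 / m2 \<le> p" using m2pos by (simp add: field_simps power2_eq_square)
  have sub: "AE z in P. z \<in> {z \<in> space P. B (fst z) \<noteq> snd z} \<longrightarrow> z \<in> space P - A"
    using P_support
  proof eventually_elim
    case (elim z)
    show ?case
    proof
      assume z: "z \<in> {z \<in> space P. B (fst z) \<noteq> snd z}"
      obtain x y where xy: "z = (x, y)" by force
      have x: "x \<in> Xs" and y: "y \<in> {1..K}" using elim xy by auto
      have Bx: "B x \<in> {1..K}" "\<forall>c\<in>{1..K}. vote Q x c \<le> vote Q x (B x)"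
        using B_bayes x unfolding is_majority_vote_def by auto
      have ne: "B x \<noteq> y" using z xy by auto
      have "vote Q x (B x) \<le> Max ((\<lambda>c. vote Q x c) ` ({1..K} - {y}))"
        using Bx ne by (intro Max_ge) auto
      moreover have "vote Q x y \<le> vote Q x (B x)" using Bx y by auto
      ultimately have "M z \<le> 0" unfolding M_def margin_def xy by simp
      then show "z \<in> space P - A" using z unfolding A_def by auto
    qed
  qed
  have "measure P {z \<in> space P. B (fst z) \<noteq> snd z} \<le> measure P (space P - A)"
    by (rule P.finite_measure_mono_AE[OF sub]) (use A_sets in auto)
  also have "\<dots> = 1 - p" unfolding p_def using P.prob_compl[OF A_sets] .
  also have "\<dots> \<le> 1 - m1\<^sup>2 / m2" using pge by simp
  finally show ?thesis unfolding m1_def m2_def M_def .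
qed

end
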